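(* Let $D$ be a quadratic discriminant and suppose that every rational prime $p$ with $p\le\sqrt{|D|/3}$ (if $D<0$) or $p\le\sqrt{D/5}$ (if $D>0$) that is irreducible in $\mathcal{O}_D$ is also prime in $\mathcal{O}_D$. Then every rational prime number factors as a product of prime elements of $\mathcal{O}_D$.
   Context: A quadratic discriminant is a nonsquare integer $D$ with $D\equiv 0$ or $1\pmod 4$. Write $D=4d+\sigma$ with $\sigma\in\{0,1\}$, let $\tau=\frac{\sigma+\sqrt{D}}{2}$, and $\mathcal{O}_D=\mathbb{Z}[\tau]=\mathbb{Z}+\mathbb{Z}\tau$. In a domain, an element is irreducible if it is nonzero, not a unit, and any factorization of it into two elements has a unit factor; it is prime if it is nonzero, not a unit, and whenever it divides a product it divides one of the factors. *)

theory Defs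
  imports Complex_Main "HOL-Computational_Algebra.Primes"
begin

definition quad_disc :: "int \<Rightarrow> bool" where
  "quad_disc D \<longleftrightarrow> (\<nexists>k. D = k^2) \<and> (D mod 4 = 0 \<or> D mod 4 = 1)"

definition qsigma :: "int \<Rightarrow> int" where
  "qsigma D = D mod 4"

definition qtau :: "int \<Rightarrow> complex" where
  "qtau D = (of_int (qsigma D) + csqrt (of_int D)) / 2"

definition OD :: "int \<Rightarrow> complex set" where
  "OD D = {of_int a + of_int b * qtau D | a b. True}"

definition dvd_OD :: "int \<Rightarrow> complex \<Rightarrow> complex \<Rightarrow> bool" where
  "dvd_OD D x y \<longleftrightarrow> (\<exists>z\<in>OD D. y = x * z)"

definition unit_OD :: "int \<Rightarrow> complex \<Rightarrow> bool" where
  "unit_OD D u \<longleftrightarrow> u \<in> OD D \<and> dvd_OD D u 1"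

definition irreducible_OD :: "int \<Rightarrow> complex \<Rightarrow> bool" where
  "irreducible_OD D x \<longleftrightarrow> x \<in> OD D \<and> x \<noteq> 0 \<and> \<not> unit_OD D x \<and>
     (\<forall>a\<in>OD D. \<forall>b\<in>OD D. x = a * b \<longrightarrow> unit_OD D a \<or> unit_OD D b)"

definition prime_OD :: "int \<Rightarrow> complex \<Rightarrow> bool" where
  "prime_OD D x \<longleftrightarrow> x \<in> OD D \<and> x \<noteq> 0 \<and> \<not> unit_OD D x \<and>
     (\<forall>a\<in>OD D. \<forall>b\<in>OD D. dvd_OD D x (a * b) \<longrightarrow> dvd_OD D x a \<or> dvd_OD D x b)"

end

theory Submission imports Defs "HOL-Computational_Algebra.Nth_Powers" "HOL-Library.Discrete_Functions"
begin

definition em :: "int \<Rightarrow> int \<Rightarrow> int \<Rightarrow> complex" where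
  "em D a b = of_int a + of_int b * qtau D"

definition dd :: "int \<Rightarrow> int" where "dd D = (D - qsigma D) div 4"

definition nrm :: "int \<Rightarrow> int \<Rightarrow> int \<Rightarrow> int" where
  "nrm D a b = a^2 + qsigma D * a * b - dd D * b^2"

lemma nonsq_aux:
  fixes n m D :: int
  assumes "m \<noteq> 0" "n^2 = D * m^2"
  shows "\<exists>k. D = k^2"
proof -
  have "is_nth_power 2 (D * m^2)" using assms(2) by (metis is_nth_power_nth_power)
  hence "is_nth_power 2 D" using is_nth_power_mult_cancel_right[of 2 "m^2" D] assms(1) by simp
  thus ?thesis by (auto elim: is_nth_powerE)
qed

lemma alg1: "s = 0 \<or> s = (1::int) \<Longrightarrow> 4*(a^2 + s*a*b - k*b^2) = (2*a+s*b)^2 - (4*k+s)*b^2"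
  by (elim disjE) (simp_all add: algebra_simps power2_eq_square)

lemma small_elem:
  fixes p s k D r :: int
  assumes s01: "s = 0 \<or> s = 1" and Dk: "D = 4*k + s" and p1: "p > 1"
    and ns: "\<nexists>m. D = m^2" and pr: "p dvd r^2 + s*r - k"
    and bd: "(D < 0 \<and> 3*p^2 > -D) \<or> (D > 0 \<and> 5*p^2 > D)"
  shows "\<exists>a. p dvd a^2 + s*a - k \<and> a^2 + s*a - k \<noteq> 0 \<and> \<bar>a^2 + s*a - k\<bar> < p^2"
proof -
  define u0 where "u0 = 2*r + s"
  have key: "\<exists>j. \<bar>(u0 + 2*j*p)^2 - D\<bar> < 4*p^2"
  proof (cases "D < 4*p^2")
    case True
    define j where "j = - ((u0+p) div (2*p))"
    have "u0 + 2*j*p = (u0+p) mod (2*p) - p" unfolding j_def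
      using div_mult_mod_eq[of "u0+p" "2*p"] by (simp add: algebra_simps)
    moreover have "0 \<le> (u0+p) mod (2*p)" "(u0+p) mod (2*p) < 2*p" using p1 by auto
    ultimately have u: "-p \<le> u0 + 2*j*p" "u0 + 2*j*p < p" by auto
    hence "\<bar>u0 + 2*j*p\<bar> \<le> p" by auto
    hence "(u0 + 2*j*p)^2 \<le> p^2" using abs_le_square_iff[of "u0+2*j*p" p] p1 by simp
    moreover have "(u0 + 2*j*p)^2 \<ge> 0" by simp
    moreover have "p^2 > 0" using p1 by simp
    ultimately have "\<bar>(u0 + 2*j*p)^2 - D\<bar> < 4*p^2" using True bd unfolding abs_less_iff by linarith
    thus ?thesis by blast
  next
    case False
    have "4*p^2 = (2*p)^2" by (simp add: power_mult_distrib)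
    hence "D \<noteq> 4*p^2" using ns by metis
    hence Dg: "D > 4*p^2" using False by simp
    hence D5: "D < 5*p^2" using bd p1 by auto
    define X where "X = D - 4*p^2"
    have X0: "X > 0" using Dg X_def by simp
    define w where "w = int (floor_sqrt (nat X))"
    have w0: "w \<ge> 0" unfolding w_def by simp
    have "(floor_sqrt (nat X))^2 \<le> nat X" by simp
    hence "int ((floor_sqrt (nat X))^2) \<le> int (nat X)" by (simp only: of_nat_le_iff)
    hence w2: "w^2 \<le> X" unfolding w_def using X0 by simp
    have "nat X < (Suc (floor_sqrt (nat X)))^2" by (rule Suc_floor_sqrt_power2_gt)
    hence "int (nat X) < int ((Suc (floor_sqrt (nat X)))^2)" by (simp only: of_nat_less_iff)
    hence w3: "X < (w+1)^2" unfolding w_def using X0 by (simp add: add.commute)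
    have "w^2 < p^2" using w2 X_def D5 by simp
    hence wp: "w < p" using p1 power_less_imp_less_base[of w 2 p] by simp
    define j where "j = - ((u0 - w - 1) div (2*p))"
    have "u0 + 2*j*p = w + 1 + (u0 - w - 1) mod (2*p)" unfolding j_def
      using div_mult_mod_eq[of "u0 - w - 1" "2*p"] by (simp add: algebra_simps)
    moreover have "0 \<le> (u0 - w - 1) mod (2*p)" "(u0 - w - 1) mod (2*p) < 2*p" using p1 by auto
    ultimately have u: "w + 1 \<le> u0 + 2*j*p" "u0 + 2*j*p \<le> w + 2*p" by auto
    define u where "u = u0 + 2*j*p"
    have "(w+1)^2 \<le> u^2" using u w0 unfolding u_def by (simp add: power_mono)
    hence lo: "u^2 - D > -4*p^2" using w3 X_def by simp
    have "u^2 \<le> (w + 2*p)^2" using u w0 unfolding u_def by (simp add: power_mono)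
    also have "\<dots> = w^2 + 4*p*w + 4*p^2" by (simp add: algebra_simps power2_eq_square)
    also have "\<dots> \<le> X + 4*p*w + 4*p^2" using w2 by simp
    also have "4*p*w < 4*p*p" using wp p1 by simp
    hence "X + 4*p*w + 4*p^2 < X + 4*p*p + 4*p^2" by simp
    finally have "u^2 < D + 4*p^2" unfolding X_def by (simp add: power2_eq_square)
    hence "\<bar>u^2 - D\<bar> < 4*p^2" using lo by auto
    thus ?thesis unfolding u_def by blast
  qed
  then obtain j where j: "\<bar>(u0 + 2*j*p)^2 - D\<bar> < 4*p^2" by blast
  define a where "a = r + j*p"
  have e4: "4*(a^2 + s*a - k) = (u0 + 2*j*p)^2 - D"
    unfolding a_def u0_def Dk using s01 by (elim disjE) (simp_all add: algebra_simps power2_eq_square)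
  have eqa: "a^2 + s*a - k = (r^2 + s*r - k) + p * (j*(2*r + j*p + s))"
    unfolding a_def by (simp add: algebra_simps power2_eq_square)
  have "p dvd (r^2 + s*r - k) + p * (j*(2*r + j*p + s))" using pr by simp
  hence "p dvd a^2 + s*a - k" unfolding eqa .
  moreover have "a^2 + s*a - k \<noteq> 0"
  proof
    assume "a^2 + s*a - k = 0"
    hence "D = (u0 + 2*j*p)^2" using e4 by simp
    thus False using ns by blast
  qed
  moreover have "\<bar>a^2 + s*a - k\<bar> < p^2" using j e4 by (simp add: abs_mult)
  ultimately show ?thesis by blast
qed

context fixes D :: int assumes qd: "quad_disc D"
begin

lemma sig01: "qsigma D = 0 \<or> qsigma D = 1"
  using qd unfolding quad_disc_def qsigma_def by blast

lemma Ddef: "D = 4 * dd D + qsigma D"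
  using qd unfolding quad_disc_def dd_def qsigma_def by auto

lemma sig_sq: "qsigma D * qsigma D = qsigma D"
  using sig01 by auto

lemma tau2: "qtau D * qtau D = of_int (qsigma D) * qtau D + of_int (dd D)"
proof -
  let ?s = "csqrt (of_int D)" and ?g = "of_int (qsigma D) :: complex"
  have s2: "?s * ?s = of_int D" using power2_csqrt[of "of_int D"] by (simp add: power2_eq_square)
  have g2: "?g * ?g = ?g" using sig_sq by (metis of_int_mult)
  have Dc: "(of_int D :: complex) = 4 * of_int (dd D) + ?g" using Ddef by (metis of_int_add of_int_mult of_int_numeral)
  have "qtau D * qtau D = (?g * ?g + 2 * ?g * ?s + ?s * ?s) / 4"
    unfolding qtau_def by (simp add: field_simps)
  also have "\<dots> = (?g + 2 * ?g * ?s + 4 * of_int (dd D) + ?g) / 4" using g2 s2 Dc by simp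
  also have "\<dots> = (?g * ?g + ?g * ?s) / 2 + of_int (dd D)" by (simp add: g2 field_simps)
  also have "\<dots> = ?g * qtau D + of_int (dd D)" unfolding qtau_def by (simp add: field_simps)
  finally show ?thesis .
qed

lemma em_mult: "em D a b * em D c e = em D (a*c + dd D*b*e) (a*e + b*c + qsigma D*b*e)"
proof -
  have "em D a b * em D c e = of_int a * of_int c + (of_int a * of_int e + of_int b * of_int c) * qtau D
        + of_int b * of_int e * (qtau D * qtau D)"
    unfolding em_def by (simp add: algebra_simps)
  also have "\<dots> = em D (a*c + dd D*b*e) (a*e + b*c + qsigma D*b*e)"
    unfolding tau2 em_def by (simp add: algebra_simps)
  finally show ?thesis .
qed

lemma em_inj: assumes "em D a b = em D c e" shows "a = c \<and> b = e"
proof (cases "b = e")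
  case True then show ?thesis using assms by (simp add: em_def)
next
  case False
  let ?s = "csqrt (of_int D)"
  have "of_int (e - b) * qtau D = (of_int (a - c) :: complex)" using assms unfolding em_def
    by (simp add: algebra_simps)
  hence "of_int (e - b) * (of_int (qsigma D) + ?s) = 2 * (of_int (a - c) :: complex)"
    unfolding qtau_def by (simp add: field_simps)
  hence "of_int (e - b) * ?s = (of_int (2*(a-c) - (e-b)*qsigma D) :: complex)"
    by (simp add: algebra_simps)
  hence "(of_int (e - b) * ?s)^2 = (of_int ((2*(a-c) - (e-b)*qsigma D)^2) :: complex)" by simp
  hence "(of_int ((e-b)^2 * D) :: complex) = of_int ((2*(a-c) - (e-b)*qsigma D)^2)"
    by (simp add: power_mult_distrib)
  hence "(2*(a-c) - (e-b)*qsigma D)^2 = D * (e-b)^2" by (simp only: of_int_eq_iff) (simp add: mult.commute)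
  then obtain k where "D = k^2" using nonsq_aux[of "e-b"] False by auto
  thus ?thesis using qd unfolding quad_disc_def by auto
qed

lemma OD_iff: "z \<in> OD D \<longleftrightarrow> (\<exists>a b. z = em D a b)"
  unfolding OD_def em_def by auto

lemma em_OD[simp]: "em D a b \<in> OD D"
  using OD_iff by blast

lemma of_int_em: "(of_int n :: complex) = em D n 0"
  by (simp add: em_def)

lemma em_scale: "of_int k * em D a b = em D (k*a) (k*b)"
  by (simp add: em_def algebra_simps)

lemma em_conj: "em D a b * em D (a + qsigma D * b) (-b) = of_int (nrm D a b)"
proof -
  have "em D a b * em D (a + qsigma D * b) (-b) = em D (a*(a + qsigma D * b) + dd D*b*(-b)) (a*(-b)+b*(a + qsigma D * b)+qsigma D*b*(-b))"
    by (rule em_mult)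
  also have "\<dots> = em D (nrm D a b) 0" unfolding nrm_def by (simp add: algebra_simps power2_eq_square)
  finally show ?thesis by (simp add: em_def)
qed

lemma nrm_mult: "nrm D (a*c + dd D*b*e) (a*e+b*c+qsigma D*b*e) = nrm D a b * nrm D c e"
  using sig01 unfolding nrm_def by (elim disjE) (simp_all add: algebra_simps power2_eq_square)

lemma OD_mult: "x \<in> OD D \<Longrightarrow> y \<in> OD D \<Longrightarrow> x * y \<in> OD D"
  unfolding OD_iff using em_mult by metis

lemma OD_int[simp]: "(of_int n :: complex) \<in> OD D"
  using of_int_em em_OD by metis

lemma OD_one[simp]: "(1::complex) \<in> OD D"
  using OD_int[of 1] by simp

lemma em_zero_iff: "em D a b = 0 \<longleftrightarrow> a = 0 \<and> b = 0"
  using em_inj[of a b 0 0] by (auto simp: em_def)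

lemma nrm_zero: assumes "nrm D a b = 0" shows "a = 0 \<and> b = 0"
proof (cases "b = 0")
  case True then show ?thesis using assms by (simp add: nrm_def)
next
  case False
  have "(2*a + qsigma D * b)^2 = D * b^2"
    using alg1[OF sig01, of a b "dd D"] assms unfolding Ddef[symmetric] nrm_def by simp
  then obtain k where "D = k^2" using nonsq_aux[of b] False by auto
  thus ?thesis using qd unfolding quad_disc_def by auto
qed

lemma dvd_em: "dvd_OD D (em D a b) z \<longleftrightarrow> (\<exists>f g. z = em D a b * em D f g)"
  unfolding dvd_OD_def using OD_iff em_OD by metis

lemma unit_iff: "unit_OD D (em D a b) \<longleftrightarrow> \<bar>nrm D a b\<bar> = 1"
proof
  assume "unit_OD D (em D a b)"
  then obtain f g where "1 = em D a b * em D f g" unfolding unit_OD_def dvd_em by auto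
  moreover have "em D 1 0 = 1" by (simp add: em_def)
  ultimately have "em D 1 0 = em D (a*f + dd D*b*g) (a*g+b*f+qsigma D*b*g)" by (simp only: em_mult)
  hence "1 = a*f + dd D*b*g" "0 = a*g+b*f+qsigma D*b*g" using em_inj by blast+
  hence "nrm D 1 0 = nrm D a b * nrm D f g" using nrm_mult by metis
  hence "nrm D a b * nrm D f g = 1" by (simp add: nrm_def)
  thus "\<bar>nrm D a b\<bar> = 1" using abs_zmult_eq_1[of "nrm D a b" "nrm D f g"] by simp
next
  assume h: "\<bar>nrm D a b\<bar> = 1"
  let ?N = "nrm D a b"
  have "em D a b * em D (?N * (a + qsigma D * b)) (?N * (-b)) = of_int ?N * (em D a b * em D (a + qsigma D * b) (-b))"
    unfolding em_scale[of "nrm D a b" "a + qsigma D * b" "-b", symmetric] by (rule mult.left_commute)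
  also have "\<dots> = of_int (?N * ?N)" by (simp only: em_conj of_int_mult)
  also have "?N * ?N = 1" using h abs_mult_self_eq[of ?N] by simp
  finally have "em D a b * em D (?N * (a + qsigma D * b)) (?N * (-b)) = 1" by simp
  thus "unit_OD D (em D a b)" unfolding unit_OD_def dvd_em by (intro conjI em_OD exI) (rule sym)
qed

lemma dvd_int: assumes "p \<noteq> 0" shows "dvd_OD D (of_int p) (em D a b) \<longleftrightarrow> p dvd a \<and> p dvd b"
proof
  assume "dvd_OD D (of_int p) (em D a b)"
  then obtain f g where "em D a b = of_int p * em D f g" unfolding of_int_em[of p] dvd_em by metis
  hence "em D a b = em D (p*f) (p*g)" by (simp add: em_scale)
  thus "p dvd a \<and> p dvd b" using em_inj by (metis dvd_triv_left)
next
  assume "p dvd a \<and> p dvd b"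
  then obtain f g where "a = p*f" "b = p*g" by (auto elim!: dvdE)
  hence "em D a b = of_int p * em D f g" by (simp add: em_scale)
  thus "dvd_OD D (of_int p) (em D a b)" unfolding dvd_OD_def using em_OD by blast
qed

lemma prime_dvd_sq_int: "prime (p::int) \<Longrightarrow> p dvd x^2 \<Longrightarrow> p dvd x"
  using prime_dvd_power by blast

lemma norm_prime:
  assumes pp: "prime (p::int)" and Np: "\<bar>nrm D x y\<bar> = p"
  shows "prime_OD D (em D x y)"
proof -
  let ?N = "nrm D x y" and ?s = "qsigma D" and ?k = "dd D"
  have p1: "p > 1" using pp prime_gt_1_int by blast
  have Nd: "?N dvd z" if "p dvd z" for z using that Np abs_dvd_iff[of ?N z] by simp
  have pN: "p dvd ?N" using Np dvd_abs_iff[of p ?N] by simp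
  have N0: "?N \<noteq> 0" using Np p1 by auto
  have py: "\<not> p dvd y"
  proof
    assume "p dvd y"
    then obtain y' where y': "y = p * y'" by (auto elim: dvdE)
    have "x^2 = ?N - ?s*x*y + ?k*y^2" unfolding nrm_def by simp
    hence "p dvd x^2" using pN y' by (simp add: power2_eq_square)
    hence "p dvd x" using prime_dvd_sq_int pp by blast
    then obtain x' where x': "x = p * x'" by (auto elim: dvdE)
    have "?N = p*p*(x'^2 + ?s*x'*y' - ?k*y'^2)" unfolding nrm_def x' y' by (simp add: algebra_simps power2_eq_square)
    hence "p*p dvd ?N" by simp
    hence "p * p dvd p" using Np dvd_abs_iff[of "p*p" ?N] by simp
    hence "p * p dvd p * 1" by simp
    hence "p dvd 1" using p1 dvd_times_left_cancel_iff[of p p 1] by simp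
    thus False using p1 by (simp add: zdvd_not_zless)
  qed
  have key: "dvd_OD D (em D x y) (em D a b) \<longleftrightarrow> p dvd (b*x - a*y)" for a b
  proof
    assume "dvd_OD D (em D x y) (em D a b)"
    then obtain f g where "em D a b = em D x y * em D f g" unfolding dvd_em by blast
    hence "em D a b = em D (x*f + ?k*y*g) (x*g+y*f+?s*y*g)" by (simp only: em_mult)
    hence ab: "a = x*f + ?k*y*g" "b = x*g+y*f+?s*y*g" using em_inj by blast+
    have "b*x - a*y = g * ?N" unfolding ab nrm_def by (simp add: algebra_simps power2_eq_square)
    thus "p dvd (b*x - a*y)" using pN by simp
  next
    assume pS: "p dvd (b*x - a*y)"
    let ?F = "a*x + a*?s*y - ?k*b*y" and ?S = "b*x - a*y"
    have "y * ?F = b * ?N - (x + ?s*y) * ?S" unfolding nrm_def by (simp add: algebra_simps power2_eq_square)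
    hence "p dvd y * ?F" using pN pS by simp
    hence "p dvd ?F" using py pp prime_dvd_multD by blast
    then obtain f where f: "?F = ?N * f" using Nd by (auto elim: dvdE)
    obtain g where g: "?S = ?N * g" using Nd pS by (auto elim: dvdE)
    have "?N * (x*f + ?k*y*g) = x*?F + ?k*y*?S" using f g by (simp add: algebra_simps)
    also have "\<dots> = ?N * a" unfolding nrm_def by (simp add: algebra_simps power2_eq_square)
    finally have e1: "x*f + ?k*y*g = a" using N0 by simp
    have "?N * (x*g+y*f+?s*y*g) = x*?S + y*?F + ?s*y*?S" using f g by (simp add: algebra_simps)
    also have "\<dots> = ?N * b" unfolding nrm_def by (simp add: algebra_simps power2_eq_square)
    finally have e2: "x*g+y*f+?s*y*g = b" using N0 by simp
    have "em D a b = em D x y * em D f g" unfolding em_mult e1 e2 ..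
    thus "dvd_OD D (em D x y) (em D a b)" unfolding dvd_em by blast
  qed
  have "em D x y \<noteq> 0" using em_zero_iff N0 by (auto simp: nrm_def)
  moreover have "\<not> unit_OD D (em D x y)" using unit_iff Np p1 by simp
  moreover have "dvd_OD D (em D x y) \<beta> \<or> dvd_OD D (em D x y) \<gamma>"
    if hh: "\<beta> \<in> OD D" "\<gamma> \<in> OD D" "dvd_OD D (em D x y) (\<beta> * \<gamma>)" for \<beta> \<gamma>
  proof -
    obtain a b where b1: "\<beta> = em D a b" using hh(1) unfolding OD_iff by blast
    obtain c e where b2: "\<gamma> = em D c e" using hh(2) unfolding OD_iff by blast
    note be = b1 b2
    let ?X = "a*c + ?k*b*e" and ?Y = "a*e+b*c+?s*b*e"
    have "dvd_OD D (em D x y) (em D ?X ?Y)" using that be em_mult by simp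
    hence h: "p dvd ?Y*x - ?X*y" using key by blast
    have "(a*y - b*x) * (c*y - e*x) = y * (?X*y - ?Y*x) + b*e*?N"
      unfolding nrm_def by (simp add: algebra_simps power2_eq_square)
    moreover have "p dvd y * (?X*y - ?Y*x) + b*e*?N"
      using h pN by (metis dvd_add dvd_mult dvd_mult2 dvd_minus_iff minus_diff_eq)
    ultimately have "p dvd (a*y - b*x) * (c*y - e*x)" by simp
    hence "p dvd (a*y - b*x) \<or> p dvd (c*y - e*x)" using pp prime_dvd_multD by blast
    hence "p dvd (b*x - a*y) \<or> p dvd (e*x - c*y)" by (metis dvd_minus_iff minus_diff_eq)
    thus ?thesis using key be by blast
  qed
  ultimately show ?thesis unfolding prime_OD_def using em_OD by blast
qed

lemma noroot_prime:
  assumes pp: "prime (p::int)" and nr: "\<And>r. \<not> p dvd nrm D r 1"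
  shows "prime_OD D (of_int p)"
proof -
  let ?s = "qsigma D" and ?k = "dd D"
  have p1: "p > 1" using pp prime_gt_1_int by blast
  have "p * p > 1" using p1 less_1_mult by blast
  hence "\<not> unit_OD D (em D p 0)" unfolding unit_iff nrm_def by (simp add: power2_eq_square)
  moreover have "dvd_OD D (of_int p) \<beta> \<or> dvd_OD D (of_int p) \<gamma>"
    if hh: "\<beta> \<in> OD D" "\<gamma> \<in> OD D" "dvd_OD D (of_int p) (\<beta> * \<gamma>)" for \<beta> \<gamma>
  proof -
    obtain a b where b1: "\<beta> = em D a b" using hh(1) unfolding OD_iff by blast
    obtain c e where b2: "\<gamma> = em D c e" using hh(2) unfolding OD_iff by blast
    note be = b1 b2
    let ?X = "a*c + ?k*b*e" and ?Y = "a*e+b*c+?s*b*e" and ?N = "nrm D a b"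
    have "dvd_OD D (of_int p) (em D ?X ?Y)" using that be em_mult by simp
    hence X: "p dvd ?X" and Y: "p dvd ?Y" using dvd_int p1 by auto
    have "(a + ?s*b)*?X - ?k*b*?Y = c * ?N" unfolding nrm_def by (simp add: algebra_simps power2_eq_square)
    hence cN: "p dvd c * ?N" using X Y by (metis dvd_diff dvd_mult)
    have "a*?Y - b*?X = e * ?N" unfolding nrm_def by (simp add: algebra_simps power2_eq_square)
    hence eN: "p dvd e * ?N" using X Y by (metis dvd_diff dvd_mult)
    show ?thesis
    proof (cases "p dvd ?N")
      case False
      hence "p dvd c" "p dvd e" using cN eN pp prime_dvd_multD by blast+
      thus ?thesis using be dvd_int p1 by auto
    next
      case True
      show ?thesis
      proof (cases "p dvd b")
        case True
        then obtain b' where b': "b = p*b'" by (auto elim: dvdE)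
        have "a^2 = ?N - ?s*a*b + ?k*b^2" unfolding nrm_def by simp
        hence "p dvd a^2" using \<open>p dvd ?N\<close> b' by (simp add: power2_eq_square)
        hence "p dvd a" using prime_dvd_sq_int pp by blast
        thus ?thesis using be dvd_int p1 True by auto
      next
        case False
        have "coprime p b" using prime_imp_coprime[OF pp False] .
        then obtain u v where uv: "u*p + v*b = 1" using bezout_int[of p b] by auto
        let ?r = "a*v"
        have "b^2 * nrm D ?r 1 - ?N = (b*v - 1) * (a^2*(b*v+1) + ?s*a*b)"
          unfolding nrm_def by (simp add: algebra_simps power2_eq_square)
        moreover have "b*v - 1 = p * (-u)" using uv by (simp add: algebra_simps)
        ultimately have "p dvd b^2 * nrm D ?r 1 - ?N" by simp
        hence "p dvd b^2 * nrm D ?r 1" using True by (metis dvd_add diff_add_cancel)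
        hence "p dvd b^2 \<or> p dvd nrm D ?r 1" using pp prime_dvd_multD by blast
        thus ?thesis using nr False prime_dvd_sq_int pp by blast
      qed
    qed
  qed
  ultimately show ?thesis unfolding prime_OD_def of_int_em[of p] using em_OD p1 em_zero_iff by auto
qed

lemma dvd_OD_refl: "x \<in> OD D \<Longrightarrow> dvd_OD D x x"
  unfolding dvd_OD_def by (intro bexI[of _ 1]) auto

lemma dvd_OD_trans: "dvd_OD D x y \<Longrightarrow> dvd_OD D y z \<Longrightarrow> dvd_OD D x z"
  unfolding dvd_OD_def by (metis OD_mult mult.assoc)

lemma prod_list_OD: "\<forall>x\<in>set xs. x \<in> OD D \<Longrightarrow> prod_list xs \<in> OD D"
  by (induction xs) (auto intro: OD_mult)

lemma cancel_primes:
  assumes "\<forall>\<pi>\<in>set \<pi>s. prime_OD D \<pi>"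
  shows "c \<in> OD D \<Longrightarrow> \<gamma> \<in> OD D \<Longrightarrow> \<delta> \<in> OD D \<Longrightarrow> c * prod_list \<pi>s = \<gamma> * \<delta> \<Longrightarrow>
    \<exists>\<gamma>' \<delta>'. \<gamma>' \<in> OD D \<and> \<delta>' \<in> OD D \<and> c = \<gamma>' * \<delta>' \<and> dvd_OD D \<gamma>' \<gamma> \<and> dvd_OD D \<delta>' \<delta>"
  using assms
proof (induction \<pi>s arbitrary: \<gamma> \<delta>)
  case Nil
  then show ?case using dvd_OD_refl by auto
next
  case (Cons \<pi> \<pi>s)
  have pr: "prime_OD D \<pi>" using Cons.prems by simp
  have ps: "\<forall>\<pi>\<in>set \<pi>s. prime_OD D \<pi>" using Cons.prems by simp
  have \<pi>OD: "\<pi> \<in> OD D" and \<pi>0: "\<pi> \<noteq> 0" using pr unfolding prime_OD_def by auto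
  have restOD: "c * prod_list \<pi>s \<in> OD D"
    using ps Cons.prems(1) prod_list_OD OD_mult unfolding prime_OD_def by blast
  have eq: "\<gamma> * \<delta> = \<pi> * (c * prod_list \<pi>s)" using Cons.prems(4) by (simp add: algebra_simps)
  have "dvd_OD D \<pi> (\<gamma> * \<delta>)" unfolding dvd_OD_def using eq restOD by blast
  hence "dvd_OD D \<pi> \<gamma> \<or> dvd_OD D \<pi> \<delta>" using pr Cons.prems(2,3) unfolding prime_OD_def by blast
  thus ?case
  proof
    assume "dvd_OD D \<pi> \<gamma>"
    then obtain \<gamma>1 where g1: "\<gamma>1 \<in> OD D" "\<gamma> = \<pi> * \<gamma>1" unfolding dvd_OD_def by blast
    have "\<pi> * (c * prod_list \<pi>s) = \<pi> * (\<gamma>1 * \<delta>)" using eq g1(2) by (metis mult.assoc)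
    hence "c * prod_list \<pi>s = \<gamma>1 * \<delta>" using \<pi>0 by simp
    then obtain \<gamma>' \<delta>' where r: "\<gamma>' \<in> OD D" "\<delta>' \<in> OD D" "c = \<gamma>' * \<delta>'" "dvd_OD D \<gamma>' \<gamma>1" "dvd_OD D \<delta>' \<delta>"
      using Cons.IH[OF Cons.prems(1) g1(1) Cons.prems(3)] ps by blast
    have "dvd_OD D \<gamma>1 \<gamma>" unfolding dvd_OD_def using g1 \<pi>OD by (auto simp: mult.commute)
    thus ?case using r dvd_OD_trans by blast
  next
    assume "dvd_OD D \<pi> \<delta>"
    then obtain \<delta>1 where g1: "\<delta>1 \<in> OD D" "\<delta> = \<pi> * \<delta>1" unfolding dvd_OD_def by blast
    have "\<pi> * (c * prod_list \<pi>s) = \<pi> * (\<gamma> * \<delta>1)" using eq g1(2) by (metis mult.assoc mult.left_commute)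
    hence "c * prod_list \<pi>s = \<gamma> * \<delta>1" using \<pi>0 by simp
    then obtain \<gamma>' \<delta>' where r: "\<gamma>' \<in> OD D" "\<delta>' \<in> OD D" "c = \<gamma>' * \<delta>'" "dvd_OD D \<gamma>' \<gamma>" "dvd_OD D \<delta>' \<delta>1"
      using Cons.IH[OF Cons.prems(1) Cons.prems(2) g1(1)] ps by blast
    have "dvd_OD D \<delta>1 \<delta>" unfolding dvd_OD_def using g1 \<pi>OD by (auto simp: mult.commute)
    thus ?case using r dvd_OD_trans by blast
  qed
qed

lemma factor_nat:
  assumes "\<And>q::nat. prime q \<Longrightarrow> q \<le> n \<Longrightarrow> \<exists>xs. (\<forall>x\<in>set xs. prime_OD D x) \<and> of_nat q = prod_list xs"
    and "n \<ge> 1"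
  shows "\<exists>xs. (\<forall>x\<in>set xs. prime_OD D x) \<and> (of_nat n :: complex) = prod_list xs"
  using assms
proof (induction n rule: less_induct)
  case (less n)
  show ?case
  proof (cases "n = 1")
    case True then show ?thesis by (intro exI[of _ "[]"]) simp
  next
    case False
    then obtain q where q: "prime q" "q dvd n" using prime_factor_nat by blast
    then obtain m where m: "n = q * m" by (auto elim: dvdE)
    have q1: "q > 1" using q prime_gt_1_nat by blast
    have m1: "m \<ge> 1" using m less.prems(2) by (cases m) auto
    have mn: "m < n" using m q1 m1 by simp
    have qn: "q \<le> n" using m m1 by simp
    obtain xs where xs: "\<forall>x\<in>set xs. prime_OD D x" "of_nat q = prod_list xs" using less.prems(1)[OF q(1) qn] by blast
    obtain ys where ys: "\<forall>x\<in>set ys. prime_OD D x" "(of_nat m :: complex) = prod_list ys"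
      using less.IH[OF mn] less.prems(1) mn m1 by (meson less_imp_le order_trans)
    show ?thesis using xs ys m by (intro exI[of _ "xs @ ys"]) auto
  qed
qed

lemma main_aux:
  assumes hyp: "\<And>p::nat. prime p \<Longrightarrow>
           ((D < 0 \<and> real p \<le> sqrt (\<bar>real_of_int D\<bar> / 3)) \<or>
            (D > 0 \<and> real p \<le> sqrt (real_of_int D / 5))) \<Longrightarrow>
           irreducible_OD D (of_nat p) \<Longrightarrow> prime_OD D (of_nat p)"
  shows "prime p \<Longrightarrow> (\<exists>xs. (\<forall>x\<in>set xs. prime_OD D x) \<and> of_nat p = prod_list xs)"
proof (induction p rule: less_induct)
  case (less p)
  let ?P = "int p" and ?s = "qsigma D" and ?k = "dd D"
  have Pp: "prime ?P" using less.prems by simp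
  have P1: "?P > 1" using Pp prime_gt_1_int by blast
  have pem: "(of_nat p :: complex) = em D ?P 0" using of_int_em[of ?P] by simp
  have pOD: "(of_nat p :: complex) \<in> OD D" unfolding pem by simp
  have "?P * ?P > 1" using P1 less_1_mult by blast
  hence pnu: "\<not> unit_OD D (of_nat p)" unfolding pem unit_iff nrm_def by (simp add: power2_eq_square)
  have p0: "(of_nat p :: complex) \<noteq> 0" using P1 by simp
  show ?case
  proof (cases "irreducible_OD D (of_nat p)")
    case False
    then obtain \<alpha> \<beta> where ab: "\<alpha> \<in> OD D" "\<beta> \<in> OD D" "of_nat p = \<alpha> * \<beta>" "\<not> unit_OD D \<alpha>" "\<not> unit_OD D \<beta>"
      using pOD pnu p0 unfolding irreducible_OD_def by blast
    obtain a b where a: "\<alpha> = em D a b" using ab(1) unfolding OD_iff by blast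
    obtain c e where c: "\<beta> = em D c e" using ab(2) unfolding OD_iff by blast
    have "em D ?P 0 = em D (a*c + ?k*b*e) (a*e + b*c + ?s*b*e)" using ab(3) pem a c em_mult by simp
    hence "?P = a*c + ?k*b*e" "0 = a*e + b*c + ?s*b*e" using em_inj by blast+
    hence "nrm D ?P 0 = nrm D a b * nrm D c e" using nrm_mult by metis
    hence NN: "nrm D a b * nrm D c e = ?P * ?P" by (simp add: nrm_def power2_eq_square)
    have na: "\<bar>nrm D a b\<bar> \<noteq> 1" using ab(4) a unit_iff by simp
    have nc: "\<bar>nrm D c e\<bar> \<noteq> 1" using ab(5) c unit_iff by simp
    have gen: "\<bar>x\<bar> = ?P \<and> \<bar>y\<bar> = ?P" if hx: "x * y = ?P * ?P" "\<bar>x\<bar> \<noteq> 1" "\<bar>y\<bar> \<noteq> 1" "?P dvd x" for x y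
    proof -
      obtain t where t: "x = ?P * t" using hx(4) by (auto elim: dvdE)
      have ty: "t * y = ?P" using hx(1) t P1 by (simp add: mult.assoc)
      have "\<bar>t\<bar> dvd ?P" using ty by (metis abs_dvd_iff dvd_triv_left)
      hence "\<bar>t\<bar> = 1 \<or> \<bar>t\<bar> = ?P" using Pp unfolding prime_int_iff by simp
      moreover have "\<bar>t\<bar> * \<bar>y\<bar> = ?P" using ty by (metis abs_mult abs_of_nat)
      ultimately show ?thesis using hx(3) t P1 by (auto simp: abs_mult)
    qed
    have "?P dvd nrm D a b * nrm D c e" using NN by simp
    hence "?P dvd nrm D a b \<or> ?P dvd nrm D c e" using Pp prime_dvd_multD by blast
    hence "\<bar>nrm D a b\<bar> = ?P \<and> \<bar>nrm D c e\<bar> = ?P"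
      using gen[OF NN na nc] gen[of "nrm D c e" "nrm D a b"] NN na nc by (auto simp: mult.commute)
    hence "prime_OD D \<alpha>" "prime_OD D \<beta>" using norm_prime Pp a c by blast+
    thus ?thesis using ab(3) by (intro exI[of _ "[\<alpha>, \<beta>]"]) simp
  next
    case irr: True
    show ?thesis
    proof (cases "(D < 0 \<and> real p \<le> sqrt (\<bar>real_of_int D\<bar> / 3)) \<or> (D > 0 \<and> real p \<le> sqrt (real_of_int D / 5))")
      case True
      hence "prime_OD D (of_nat p)" using hyp less.prems irr by blast
      thus ?thesis by (intro exI[of _ "[of_nat p]"]) simp
    next
      case small: False
      have D0: "D \<noteq> 0" using qd unfolding quad_disc_def by (metis power_zero_numeral)
      have bd: "(D < 0 \<and> 3*?P^2 > -D) \<or> (D > 0 \<and> 5*?P^2 > D)"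
      proof (cases "D < 0")
        case True
        hence "\<not> real p \<le> sqrt (\<bar>real_of_int D\<bar> / 3)" using small by blast
        hence "\<not> (real p)^2 \<le> \<bar>real_of_int D\<bar> / 3" using real_le_rsqrt by blast
        hence "real_of_int (3*?P^2) > real_of_int (-D)" using True by simp
        hence "3*?P^2 > -D" by (simp only: of_int_less_iff)
        thus ?thesis using True by blast
      next
        case False
        hence Dp: "D > 0" using D0 by simp
        hence "\<not> real p \<le> sqrt (real_of_int D / 5)" using small by blast
        hence "\<not> (real p)^2 \<le> real_of_int D / 5" using real_le_rsqrt by blast
        hence "real_of_int (5*?P^2) > real_of_int D" by simp
        hence "5*?P^2 > D" by (simp only: of_int_less_iff)
        thus ?thesis using Dp by blast
      qed
      have "prime_OD D (of_int ?P)"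
      proof (rule ccontr)
        assume np: "\<not> prime_OD D (of_int ?P)"
        then obtain r where r: "?P dvd nrm D r 1" using noroot_prime Pp by blast
        have ns: "\<nexists>m. D = m^2" using qd unfolding quad_disc_def by blast
        obtain a where a: "?P dvd a^2 + ?s*a - ?k" "a^2 + ?s*a - ?k \<noteq> 0" "\<bar>a^2 + ?s*a - ?k\<bar> < ?P^2"
          using small_elem[OF sig01 Ddef P1 ns _ bd] r unfolding nrm_def by auto
        have na: "nrm D a 1 = a^2 + ?s*a - ?k" unfolding nrm_def by simp
        obtain m where m: "nrm D a 1 = ?P * m" using a(1) na by (auto elim: dvdE)
        have m0: "m \<noteq> 0" using m a(2) na by auto
        have "\<bar>?P\<bar> * \<bar>m\<bar> < ?P * ?P" using m a(3) na by (simp add: abs_mult power2_eq_square)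
        hence mP: "\<bar>m\<bar> < ?P" using P1 by simp
        define M where "M = nat \<bar>m\<bar>"
        have M: "int M = \<bar>m\<bar>" "M \<ge> 1" "M < p" using m0 mP unfolding M_def by auto
        obtain \<pi>s where \<pi>s: "\<forall>x\<in>set \<pi>s. prime_OD D x" "(of_nat M :: complex) = prod_list \<pi>s"
          using factor_nat[of M] less.IH M(2,3) by (meson le_less_trans)
        define sg where "sg = sgn m"
        have sg: "sg * m = \<bar>m\<bar>" "\<bar>sg\<bar> = 1" using m0 unfolding sg_def by (auto simp: abs_sgn sgn_mult_abs)
        have cj: "em D a 1 * em D (a + ?s * 1) (-1) = of_int (?P * m)" using em_conj[of a 1] m by simp
        have Mc: "(of_nat M :: complex) = of_int (sg*m)" using M(1) sg(1) by (metis of_int_of_nat_eq)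
        have "of_int ?P * prod_list \<pi>s = of_int sg * (em D a 1 * em D (a + ?s * 1) (-1))"
          unfolding cj \<pi>s(2)[symmetric] Mc by (simp add: ac_simps)
        also have "\<dots> = em D (sg*a) (sg*1) * em D (a + ?s * 1) (-1)" unfolding em_scale[of sg a 1, symmetric] by (rule mult.assoc[symmetric])
        finally have eq: "of_int ?P * prod_list \<pi>s = em D (sg*a) (sg*1) * em D (a + ?s * 1) (-1)" .
        obtain \<gamma> \<delta> where gd: "\<gamma> \<in> OD D" "\<delta> \<in> OD D" "of_int ?P = \<gamma> * \<delta>"
           "dvd_OD D \<gamma> (em D (sg*a) (sg*1))" "dvd_OD D \<delta> (em D (a + ?s * 1) (-1))"
          using cancel_primes[OF \<pi>s(1) OD_int em_OD em_OD eq] by blast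
        have "unit_OD D \<gamma> \<or> unit_OD D \<delta>" using irr gd unfolding irreducible_OD_def by simp
        thus False
        proof
          assume "unit_OD D \<gamma>"
          then obtain v where v: "v \<in> OD D" "1 = \<gamma> * v" unfolding unit_OD_def dvd_OD_def by blast
          have "\<delta> = of_int ?P * v" using v gd(3) by (metis mult.assoc mult.commute mult.left_neutral)
          hence "dvd_OD D (of_int ?P) \<delta>" unfolding dvd_OD_def using v by blast
          hence "dvd_OD D (of_int ?P) (em D (a + ?s * 1) (-1))" using gd(5) dvd_OD_trans by blast
          hence "?P dvd -1" using dvd_int[of ?P "a + ?s * 1" "-1"] P1 by simp
          thus False using P1 by simp
        next
          assume "unit_OD D \<delta>"
          then obtain v where v: "v \<in> OD D" "1 = \<delta> * v" unfolding unit_OD_def dvd_OD_def by blast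
          have "\<gamma> = of_int ?P * v" using v gd(3) by (metis mult.assoc mult.commute mult.right_neutral)
          hence "dvd_OD D (of_int ?P) \<gamma>" unfolding dvd_OD_def using v by blast
          hence "dvd_OD D (of_int ?P) (em D (sg*a) (sg*1))" using gd(4) dvd_OD_trans by blast
          hence "?P dvd sg" using dvd_int[of ?P "sg*a" "sg*1"] P1 by simp
          hence "?P dvd 1" using sg(2) by (metis abs_dvd_iff dvd_abs_iff)
          thus False using P1 by simp
        qed
      qed
      thus ?thesis by (intro exI[of _ "[of_nat p]"]) simp
    qed
  qed
qed

end

theorem mainTheorem3:
  fixes D :: int
  assumes "quad_disc D"
    and "\<And>p::nat. prime p \<Longrightarrow>
           ((D < 0 \<and> real p \<le> sqrt (\<bar>real_of_int D\<bar> / 3)) \<or>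
            (D > 0 \<and> real p \<le> sqrt (real_of_int D / 5))) \<Longrightarrow>
           irreducible_OD D (of_nat p) \<Longrightarrow> prime_OD D (of_nat p)"
  shows "\<forall>p::nat. prime p \<longrightarrow>
           (\<exists>xs. (\<forall>x\<in>set xs. prime_OD D x) \<and> of_nat p = prod_list xs)"
  using main_aux[OF assms(1), of _] assms(2) by blast

end
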